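(* Let $d,k\ge 1$, let $\pi(a|s)$ be a policy on actions $a\in\{0,\dots,k-1\}$ and states $s\in\{1,\dots,d\}$, and let $M=(M^a)_{a}$ be a family of nonnegative $d\times d$ matrices with $M^a_{s+}:=\sum_{s'}M^a_{ss'}=\pi(a|s)$ for all $a,s$, and such that $M^+:=\sum_a M^a$ has all entries strictly positive. Then the following are equivalent: (1) every family $W=(W^a)_a$ of nonnegative $d\times d$ matrices with $W^a_{s+}=\pi(a|s)$ for all $a,s$, with $W^+:=\sum_a W^a$ entrywise strictly positive, and with $M^a\oslash M^+=W^a\oslash W^+$ for all $a$, satisfies $W=M$; (2) for every state $s$, the $k\times d$ matrix $(M^a_{ss'})_{a,s'}$ has rank $\ge d$ (i.e. rank $d$).
   Context: $M^a_{ss'}$ is interpreted as $\pi(a|s)\,p(s'|s,a)$ for a controlled Markov process, so $B^a:=M^a\oslash M^+$ is the inverse model $p(a|s,s')$. Here $\oslash$ denotes entrywise division of matrices, $[A\oslash B]_{ss'}=A_{ss'}/B_{ss'}$. *)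

theory Defs
  imports "HOL-Analysis.Analysis"
begin

end

theory Submission
  imports Defs
begin

lemma rank_ker_iff:
  fixes A :: "real^'n^'m"
  shows "CARD('n) \<le> rank A \<longleftrightarrow> (\<forall>x. A *v x = 0 \<longrightarrow> x = 0)"
  using rank_bound[of A] matrix_nonfull_linear_equations_eq[of A] by auto

lemma aux_lt1: "0 \<le> (S::real) \<Longrightarrow> 1 / (2 * (1 + S)) * S < 1"
  by (simp add: field_simps)

theorem proposition1:
  fixes pi :: "'act::finite \<Rightarrow> 's::finite \<Rightarrow> real"
    and M :: "'act \<Rightarrow> 's \<Rightarrow> 's \<Rightarrow> real"
  assumes pi_nonneg: "\<And>a s. pi a s \<ge> 0"
    and pi_sum: "\<And>s. (\<Sum>a\<in>UNIV. pi a s) = 1"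
    and M_nonneg: "\<And>a s s'. M a s s' \<ge> 0"
    and M_row: "\<And>a s. (\<Sum>s'\<in>UNIV. M a s s') = pi a s"
    and M_plus_pos: "\<And>s s'. (\<Sum>a\<in>UNIV. M a s s') > 0"
  shows "(\<forall>W :: 'act \<Rightarrow> 's \<Rightarrow> 's \<Rightarrow> real.
            (\<forall>a s s'. W a s s' \<ge> 0) \<and>
            (\<forall>a s. (\<Sum>s'\<in>UNIV. W a s s') = pi a s) \<and>
            (\<forall>s s'. (\<Sum>a\<in>UNIV. W a s s') > 0) \<and>
            (\<forall>a s s'. M a s s' / (\<Sum>b\<in>UNIV. M b s s') = W a s s' / (\<Sum>b\<in>UNIV. W b s s'))
            \<longrightarrow> W = M)
         \<longleftrightarrow> (\<forall>s. rank ((\<chi> a s'. M a s s') :: real^'s^'act) \<ge> CARD('s))"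
proof -
  define m where "m s s' = (\<Sum>b\<in>UNIV. M b s s')" for s s'
  have mpos: "m s s' > 0" for s s' using M_plus_pos by (simp add: m_def)
  have mv: "(((\<chi> a s'. M a s s') :: real^'s^'act) *v x) $ a = (\<Sum>t\<in>UNIV. M a s t * x $ t)" for s x a
    by (simp add: matrix_vector_mult_def)
  have ker: "(((\<chi> a s'. M a s s') :: real^'s^'act) *v x = 0) \<longleftrightarrow> (\<forall>a. (\<Sum>t\<in>UNIV. M a s t * x $ t) = 0)" for s x
    by (simp add: vec_eq_iff mv)
  show ?thesis
  proof
    assume H: "\<forall>W :: 'act \<Rightarrow> 's \<Rightarrow> 's \<Rightarrow> real.
            (\<forall>a s s'. W a s s' \<ge> 0) \<and>
            (\<forall>a s. (\<Sum>s'\<in>UNIV. W a s s') = pi a s) \<and>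
            (\<forall>s s'. (\<Sum>a\<in>UNIV. W a s s') > 0) \<and>
            (\<forall>a s s'. M a s s' / (\<Sum>b\<in>UNIV. M b s s') = W a s s' / (\<Sum>b\<in>UNIV. W b s s'))
            \<longrightarrow> W = M"
    show "\<forall>s. rank ((\<chi> a s'. M a s s') :: real^'s^'act) \<ge> CARD('s)"
    proof (intro allI, unfold rank_ker_iff, intro allI impI)
      fix s and x :: "real^'s"
      assume "(\<chi> a s'. M a s s') *v x = 0"
      hence kx: "(\<Sum>t\<in>UNIV. M a s t * x $ t) = 0" for a using ker by blast
      define e where "e = 1 / (2 * (1 + (\<Sum>t\<in>UNIV. \<bar>x $ t\<bar>)))"
      have S0: "0 \<le> (\<Sum>t\<in>UNIV. \<bar>x $ t\<bar>)" by (simp add: sum_nonneg)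
      have epos: "e > 0" using S0 unfolding e_def by (intro divide_pos_pos mult_pos_pos add_pos_nonneg) auto
      have small: "1 + e * x $ t > 0" for t
      proof -
        have "\<bar>x $ t\<bar> \<le> (\<Sum>t\<in>UNIV. \<bar>x $ t\<bar>)"
          by (rule member_le_sum) auto
        hence "e * \<bar>x $ t\<bar> \<le> e * (\<Sum>t\<in>UNIV. \<bar>x $ t\<bar>)" using epos by (simp add: mult_left_mono)
        also have "\<dots> < 1" using S0 unfolding e_def by (rule aux_lt1)
        finally have "e * \<bar>x $ t\<bar> < 1" .
        moreover have "- (e * x $ t) \<le> e * \<bar>x $ t\<bar>" using epos
          by (metis abs_ge_minus_self abs_mult abs_of_pos)
        ultimately show ?thesis by linarith
      qed
      define W where "W a t t' = (if t = s then M a s t' * (1 + e * x $ t') else M a t t')" for a t t'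
      have Wsum: "(\<Sum>b\<in>UNIV. W b t t') = (if t = s then m s t' * (1 + e * x $ t') else m t t')" for t t'
        by (simp add: W_def m_def sum_distrib_right)
      have c1: "\<forall>a t t'. W a t t' \<ge> 0"
        using M_nonneg small by (simp add: W_def less_imp_le)
      have c2: "\<forall>a t. (\<Sum>t'\<in>UNIV. W a t t') = pi a t"
      proof (intro allI)
        fix a t
        show "(\<Sum>t'\<in>UNIV. W a t t') = pi a t"
        proof (cases "t = s")
          case True
          have "(\<Sum>t'\<in>UNIV. W a t t') = (\<Sum>t'\<in>UNIV. M a s t') + e * (\<Sum>t'\<in>UNIV. M a s t' * x $ t')"
            using True by (simp add: W_def algebra_simps sum.distrib sum_distrib_left)
          then show ?thesis using kx M_row True by simp
        qed (simp add: W_def M_row)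
      qed
      have c3: "\<forall>t t'. (\<Sum>b\<in>UNIV. W b t t') > 0"
        using mpos small by (simp add: Wsum)
      have c4: "\<forall>a t t'. M a t t' / (\<Sum>b\<in>UNIV. M b t t') = W a t t' / (\<Sum>b\<in>UNIV. W b t t')"
      proof (intro allI)
        fix a t t'
        show "M a t t' / (\<Sum>b\<in>UNIV. M b t t') = W a t t' / (\<Sum>b\<in>UNIV. W b t t')"
          using small[of t'] unfolding Wsum by (simp add: W_def m_def)
      qed
      have WM: "W = M" using H c1 c2 c3 c4 by blast
      show "x = 0"
      proof (rule vec_eq_iff[THEN iffD2, rule_format])
        fix t
        have "W a s t = M a s t" for a using WM by simp
        hence "M a s t * (e * x $ t) = 0" for a by (simp add: W_def algebra_simps)
        hence "(\<Sum>a\<in>UNIV. M a s t * (e * x $ t)) = 0" by (intro sum.neutral) blast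
        hence "(\<Sum>a\<in>UNIV. M a s t) * (e * x $ t) = 0" by (simp only: sum_distrib_right)
        thus "x $ t = 0 $ t" using mpos[of s t] epos by (simp add: m_def)
      qed
    qed
  next
    assume R: "\<forall>s. rank ((\<chi> a s'. M a s s') :: real^'s^'act) \<ge> CARD('s)"
    show "\<forall>W :: 'act \<Rightarrow> 's \<Rightarrow> 's \<Rightarrow> real.
            (\<forall>a s s'. W a s s' \<ge> 0) \<and>
            (\<forall>a s. (\<Sum>s'\<in>UNIV. W a s s') = pi a s) \<and>
            (\<forall>s s'. (\<Sum>a\<in>UNIV. W a s s') > 0) \<and>
            (\<forall>a s s'. M a s s' / (\<Sum>b\<in>UNIV. M b s s') = W a s s' / (\<Sum>b\<in>UNIV. W b s s'))
            \<longrightarrow> W = M"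
    proof (intro allI impI)
      fix W :: "'act \<Rightarrow> 's \<Rightarrow> 's \<Rightarrow> real"
      assume A: "(\<forall>a s s'. W a s s' \<ge> 0) \<and>
            (\<forall>a s. (\<Sum>s'\<in>UNIV. W a s s') = pi a s) \<and>
            (\<forall>s s'. (\<Sum>a\<in>UNIV. W a s s') > 0) \<and>
            (\<forall>a s s'. M a s s' / (\<Sum>b\<in>UNIV. M b s s') = W a s s' / (\<Sum>b\<in>UNIV. W b s s'))"
      define w where "w s s' = (\<Sum>b\<in>UNIV. W b s s')" for s s'
      have wpos: "w s s' > 0" for s s' using A by (simp add: w_def)
      have Weq: "W a s s' = M a s s' * (w s s' / m s s')" for a s s'
      proof -
        have "M a s s' / m s s' = W a s s' / w s s'" using A by (simp add: m_def w_def)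
        thus ?thesis using wpos[of s s'] mpos[of s s'] by (simp add: field_simps)
      qed
      have wm: "w s t = m s t" for s t
      proof -
        define x :: "real^'s" where "x = (\<chi> t. w s t / m s t - 1)"
        have "(\<Sum>t\<in>UNIV. M a s t * x $ t) = 0" for a
        proof -
          have "(\<Sum>t\<in>UNIV. M a s t * x $ t) = (\<Sum>t\<in>UNIV. W a s t) - (\<Sum>t\<in>UNIV. M a s t)"
            by (simp add: x_def Weq algebra_simps sum_subtractf)
          thus ?thesis using A M_row by simp
        qed
        hence "x = 0" using R ker[of s x] rank_ker_iff by blast
        hence "w s t / m s t - 1 = 0" by (metis vec_lambda_beta x_def zero_index)
        thus ?thesis using mpos[of s t] by (simp add: field_simps)
      qed
      show "W = M" using Weq wm mpos by (intro ext) (simp add: less_imp_neq[symmetric])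
    qed
  qed
qed

end
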